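(* Every Boolean metric space $X$ over a Boolean ring $B$ is isometric to a metrizable subset of a $B$-module equipped with its modular metric. Furthermore, for any fixed $x_{0}\in X$ there exist a $B$-module $M$, a metrizable subset $S\subseteq M$ with $0\in S$, and an isometry $g:X\to S$ (for the modular metric on $S$) with $g(x_{0})=0$.
   Context: $B$ is a Boolean ring ($a\vee b=a+b+ab$, $a\le b\iff ab=a$, $\bar a=1+a$); $B$ is a regular ring whose idempotents are all its elements. A Boolean metric space over $B$: set $X$ with $d:X\times X\to B$, $d(x,y)=0\iff x=y$, symmetric, $d(x,z)\le d(x,y)\vee d(y,z)$. An isometry is a bijection $f$ with $d(f(x),f(y))=d(x,y)$. For a regular ring $A$ and an $A$-module $M$, a subset $S\subseteq M$ is metrizable if for all $x,y\in S$ the annihilator ideal $\mathrm{Ann}(x-y)=\{a\in A: a(x-y)=0\}$ is principal; it then has a unique idempotent generator $a_{xy}$, and the modular metric on $S$ is $d(x,y)=1-a_{xy}$ (the complement of $a_{xy}$ in the Boolean ring of idempotents of $A$). *)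

theory Defs
  imports Main HOL.Modules "HOL-Library.Function_Algebras"
begin

definition boolean_ring :: "'b::comm_ring_1 itself \<Rightarrow> bool" where
  "boolean_ring _ \<longleftrightarrow> (\<forall>a::'b. a * a = a)"

definition bjoin :: "'b::comm_ring_1 \<Rightarrow> 'b \<Rightarrow> 'b" where
  "bjoin a b = a + b + a * b"

definition ble :: "'b::comm_ring_1 \<Rightarrow> 'b \<Rightarrow> bool" where
  "ble a b \<longleftrightarrow> a * b = a"

definition boolean_metric :: "'x set \<Rightarrow> ('x \<Rightarrow> 'x \<Rightarrow> 'b::comm_ring_1) \<Rightarrow> bool" where
  "boolean_metric X d \<longleftrightarrow>
     (\<forall>x\<in>X. \<forall>y\<in>X. (d x y = 0 \<longleftrightarrow> x = y)) \<and>
     (\<forall>x\<in>X. \<forall>y\<in>X. d x y = d y x) \<and>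
     (\<forall>x\<in>X. \<forall>y\<in>X. \<forall>z\<in>X. ble (d x z) (bjoin (d x y) (d y z)))"

definition ann :: "('a::comm_ring_1 \<Rightarrow> 'm::ab_group_add \<Rightarrow> 'm) \<Rightarrow> 'm \<Rightarrow> 'a set" where
  "ann scale v = {a. scale a v = 0}"

definition metrizable :: "('a::comm_ring_1 \<Rightarrow> 'm::ab_group_add \<Rightarrow> 'm) \<Rightarrow> 'm set \<Rightarrow> bool" where
  "metrizable scale S \<longleftrightarrow>
     (\<forall>x\<in>S. \<forall>y\<in>S. \<exists>c. ann scale (x - y) = {c * r | r. True})"

definition modular_metric :: "('a::comm_ring_1 \<Rightarrow> 'm::ab_group_add \<Rightarrow> 'm) \<Rightarrow> 'm \<Rightarrow> 'm \<Rightarrow> 'a" where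
  "modular_metric scale x y =
     1 - (THE a. a * a = a \<and> ann scale (x - y) = {a * r | r. True})"

definition modular_isometry ::
  "'x set \<Rightarrow> ('x \<Rightarrow> 'x \<Rightarrow> 'a::comm_ring_1) \<Rightarrow> ('a \<Rightarrow> 'm::ab_group_add \<Rightarrow> 'm) \<Rightarrow> 'm set \<Rightarrow> ('x \<Rightarrow> 'm) \<Rightarrow> bool" where
  "modular_isometry X d scale S g \<longleftrightarrow>
     bij_betw g X S \<and> (\<forall>x\<in>X. \<forall>y\<in>X. modular_metric scale (g x) (g y) = d x y)"

end

theory Submission
  imports Defs
begin

lemma bool_char2:
  assumes "boolean_ring TYPE('b::comm_ring_1)"
  shows "(1::'b) + 1 = 0"
proof -
  have "((1::'b)+1)*(1+1) = 1+1" using assms unfolding boolean_ring_def by blast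
  hence "(1::'b)+1+1+1 = 1+1" by (simp add: algebra_simps)
  thus ?thesis by (metis add.assoc add_left_imp_eq add.right_neutral)
qed

lemma bool_neg:
  assumes "boolean_ring TYPE('b::comm_ring_1)"
  shows "- (a::'b) = a"
proof -
  have "a + a = a * (1+1)" by (simp add: algebra_simps)
  also have "\<dots> = 0" using bool_char2[OF assms] by simp
  finally show ?thesis by (simp add: add_eq_0_iff)
qed

lemma key_diff:
  fixes p q u :: "'b::comm_ring_1"
  assumes B: "boolean_ring TYPE('b)"
    and h1: "p * (u + q + u*q) = p" and h2: "q * (u + p + u*p) = q"
  shows "u * (p - q) = p - q"
proof -
  have i: "\<And>x::'b. x*x = x" using B unfolding boolean_ring_def by blast
  have n: "\<And>x::'b. - x = x" using bool_neg[OF B] .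
  have c: "\<And>x::'b. x + x = 0" using n by (metis add_eq_0_iff)
  have e1: "p*u + p*q + u*(p*q) = p" using h1 by (simp add: algebra_simps)
  have e2: "q*u + p*q + u*(p*q) = q" using h2 by (simp add: algebra_simps)
  have "(p*u + q*u) + (p*q+p*q) + (u*(p*q)+u*(p*q)) = (p*u + p*q + u*(p*q)) + (q*u + p*q + u*(p*q))"
    by (simp only: ac_simps)
  also have "\<dots> = p + q" using e1 e2 by simp
  finally have s1: "p*u + q*u = p + q" by (simp add: c)
  have pq: "p - q = p + q" using n by (metis diff_conv_add_uminus)
  have "u * (p - q) = u * (p + q)" by (simp only: pq)
  also have "\<dots> = p*u + q*u" by (simp add: algebra_simps)
  also have "\<dots> = p + q" by (rule s1)
  finally show ?thesis by (simp only: pq)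
qed

definition sc :: "'b::comm_ring_1 \<Rightarrow> ('x \<Rightarrow> 'b) \<Rightarrow> ('x \<Rightarrow> 'b)" where
  "sc a f = (\<lambda>z. a * f z)"

lemma module_sc: "module (sc :: 'b::comm_ring_1 \<Rightarrow> ('x \<Rightarrow> 'b) \<Rightarrow> ('x \<Rightarrow> 'b))"
  by unfold_locales (auto simp: sc_def algebra_simps)

lemma the_gen:
  fixes u :: "'b::comm_ring_1"
  assumes B: "boolean_ring TYPE('b)" and A: "A = {(1-u) * r | r. True}"
  shows "(THE a. a * a = a \<and> A = {a * r | r. True}) = 1 - u"
proof (rule the_equality)
  have i: "\<And>x::'b. x*x = x" using B unfolding boolean_ring_def by blast
  show "(1 - u) * (1 - u) = 1 - u \<and> A = {(1 - u) * r |r. True}" using i A by simp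
  fix a assume a: "a * a = a \<and> A = {a * r |r. True}"
  have "a \<in> A" using a by (auto intro: exI[of _ 1])
  then obtain r where r: "a = (1-u)*r" using A by auto
  have "1 - u \<in> A" using A by (auto intro: exI[of _ 1])
  then obtain s where s: "1 - u = a*s" using a by auto
  have "(1-u)*a = a" using r i[of "1-u"] by (metis mult.assoc)
  moreover have "a*(1-u) = 1-u" using s a by (metis mult.assoc)
  ultimately show "a = 1 - u" by (simp add: mult.commute)
qed

lemma general:
  fixes X :: "'x set" and d :: "'x \<Rightarrow> 'x \<Rightarrow> 'b::comm_ring_1" and c :: "'x \<Rightarrow> 'b"
  assumes B: "boolean_ring TYPE('b)"
    and M: "boolean_metric X d"
  defines "g \<equiv> \<lambda>x. (\<lambda>z. if z \<in> X then d x z else 0) - c"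
  shows "metrizable sc (g ` X) \<and> modular_isometry X d sc (g ` X) g"
proof -
  have i: "\<And>x::'b. x*x = x" using B unfolding boolean_ring_def by blast
  have d0: "\<And>x y. x\<in>X \<Longrightarrow> y\<in>X \<Longrightarrow> d x y = 0 \<longleftrightarrow> x = y"
   and ds: "\<And>x y. x\<in>X \<Longrightarrow> y\<in>X \<Longrightarrow> d x y = d y x"
   and dt: "\<And>x y z. x\<in>X \<Longrightarrow> y\<in>X \<Longrightarrow> z\<in>X \<Longrightarrow> d x z * (d x y + d y z + d x y * d y z) = d x z"
    using M unfolding boolean_metric_def ble_def bjoin_def by blast+
  have gd: "g x - g y = (\<lambda>z. if z \<in> X then d x z - d y z else 0)" for x y
    unfolding g_def by (rule ext) (simp add: fun_diff_def)
  have ann_eq: "ann sc (g x - g y) = {(1 - d x y) * r | r. True}" if x: "x\<in>X" and y: "y\<in>X" for x y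
  proof -
    have md: "d x y * (d x z - d y z) = d x z - d y z" if z: "z \<in> X" for z
    proof (rule key_diff[OF B])
      show "d x z * (d x y + d y z + d x y * d y z) = d x z" by (rule dt[OF x y z])
      have "d y z * (d y x + d x z + d y x * d x z) = d y z" by (rule dt[OF y x z])
      thus "d y z * (d x y + d x z + d x y * d x z) = d y z" by (simp only: ds[OF y x])
    qed
    have A1: "a \<in> ann sc (g x - g y) \<longleftrightarrow> a * d x y = 0" for a
    proof
      assume "a \<in> ann sc (g x - g y)"
      hence "(\<lambda>z. a * (if z \<in> X then d x z - d y z else 0)) = 0"
        unfolding ann_def sc_def gd by simp
      from fun_cong[OF this, of y] y d0[OF y y] show "a * d x y = 0" by simp
    next
      assume a: "a * d x y = 0"
      have "a * (d x z - d y z) = 0" if "z \<in> X" for z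
      proof -
        have "a * (d x z - d y z) = a * (d x y * (d x z - d y z))" by (simp only: md[OF that])
        also have "\<dots> = (a * d x y) * (d x z - d y z)" by (simp only: mult.assoc)
        also have "\<dots> = 0" by (simp only: a mult_zero_left)
        finally show ?thesis .
      qed
      hence "(\<lambda>z. a * (if z \<in> X then d x z - d y z else 0)) = 0"
        by (auto simp: fun_eq_iff)
      thus "a \<in> ann sc (g x - g y)"
        unfolding ann_def sc_def gd by simp
    qed
    have A2: "a * d x y = 0 \<longleftrightarrow> (\<exists>r. a = (1 - d x y) * r)" for a
    proof
      assume "a * d x y = 0" thus "\<exists>r. a = (1 - d x y) * r"
        by (intro exI[of _ a]) (simp add: algebra_simps)
    next
      assume "\<exists>r. a = (1 - d x y) * r"
      then obtain r where "a = (1 - d x y) * r" by blast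
      hence "a * d x y = (1 - d x y) * r * d x y" by simp
      also have "\<dots> = r * d x y - r * (d x y * d x y)" by (simp add: algebra_simps)
      also have "\<dots> = 0" using i[of "d x y"] by simp
      finally show "a * d x y = 0" .
    qed
    show ?thesis
    proof (rule set_eqI)
      fix a show "a \<in> ann sc (g x - g y) \<longleftrightarrow> a \<in> {(1 - d x y) * r | r. True}"
        unfolding A1 A2 by blast
    qed
  qed
  have mm: "modular_metric sc (g x) (g y) = d x y" if "x\<in>X" "y\<in>X" for x y
    unfolding modular_metric_def using the_gen[OF B ann_eq[OF that]] by simp
  have inj: "inj_on g X"
  proof (rule inj_onI)
    fix x y assume x: "x\<in>X" and y: "y\<in>X" and "g x = g y"
    hence "g y - g x = 0" by simp
    hence "(\<lambda>z. if z \<in> X then d y z - d x z else 0) = 0" by (simp only: gd)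
    from fun_cong[OF this, of x] have "(if x \<in> X then d y x - d x x else 0) = 0" by simp
    hence "d y x = 0" using x d0[OF x x] by simp
    thus "x = y" using d0[OF y x] by simp
  qed
  have met: "metrizable sc (g ` X)"
    unfolding metrizable_def
  proof (intro ballI)
    fix u v assume "u \<in> g ` X" "v \<in> g ` X"
    then obtain x y where "x \<in> X" "y \<in> X" "u = g x" "v = g y" by blast
    thus "\<exists>c. ann sc (u - v) = {c * r |r. True}" using ann_eq by blast
  qed
  have "bij_betw g X (g ` X)" using inj by (simp add: bij_betw_def)
  thus ?thesis using met mm unfolding modular_isometry_def by simp
qed

theorem mainTheorem13:
  fixes X :: "'x set" and d :: "'x \<Rightarrow> 'x \<Rightarrow> 'b::comm_ring_1"
  assumes "boolean_ring TYPE('b)"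
    and "boolean_metric X d"
  shows "(\<exists>(scale :: 'b \<Rightarrow> ('x \<Rightarrow> 'b) \<Rightarrow> ('x \<Rightarrow> 'b)) S g.
            module scale \<and> metrizable scale S \<and> modular_isometry X d scale S g)
       \<and> (\<forall>x0\<in>X. \<exists>(scale :: 'b \<Rightarrow> ('x \<Rightarrow> 'b) \<Rightarrow> ('x \<Rightarrow> 'b)) S g.
            module scale \<and> metrizable scale S \<and> 0 \<in> S \<and>
            modular_isometry X d scale S g \<and> g x0 = 0)"
proof
  let ?g = "\<lambda>c x. (\<lambda>z. if z \<in> X then d x z else 0) - c"
  show "\<exists>(scale :: 'b \<Rightarrow> ('x \<Rightarrow> 'b) \<Rightarrow> ('x \<Rightarrow> 'b)) S g.
            module scale \<and> metrizable scale S \<and> modular_isometry X d scale S g"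
  proof (intro exI conjI)
    show "module sc" by (rule module_sc)
    show "metrizable sc (?g 0 ` X)" by (rule conjunct1[OF general[OF assms, of 0]])
    show "modular_isometry X d sc (?g 0 ` X) (?g 0)" by (rule conjunct2[OF general[OF assms, of 0]])
  qed
  show "\<forall>x0\<in>X. \<exists>(scale :: 'b \<Rightarrow> ('x \<Rightarrow> 'b) \<Rightarrow> ('x \<Rightarrow> 'b)) S g.
            module scale \<and> metrizable scale S \<and> 0 \<in> S \<and>
            modular_isometry X d scale S g \<and> g x0 = 0"
  proof
    fix x0 assume x0: "x0 \<in> X"
    let ?c = "(\<lambda>z. if z \<in> X then d x0 z else 0)"
    have z: "?g ?c x0 = 0" by (rule diff_self)
    have z2: "0 \<in> ?g ?c ` X" by (rule image_eqI[where f="?g ?c" and x=x0, OF z[symmetric] x0])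
    show "\<exists>(scale :: 'b \<Rightarrow> ('x \<Rightarrow> 'b) \<Rightarrow> ('x \<Rightarrow> 'b)) S g.
            module scale \<and> metrizable scale S \<and> 0 \<in> S \<and>
            modular_isometry X d scale S g \<and> g x0 = 0"
    proof (intro exI conjI)
      show "module sc" by (rule module_sc)
      show "metrizable sc (?g ?c ` X)" by (rule conjunct1[OF general[OF assms, of ?c]])
      show "modular_isometry X d sc (?g ?c ` X) (?g ?c)" by (rule conjunct2[OF general[OF assms, of ?c]])
      show "0 \<in> ?g ?c ` X" by (rule z2)
      show "?g ?c x0 = 0" by (rule z)
    qed
  qed
qed

end
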